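(* Let $F$ be the elementary cellular automaton with rule number 13, or the one with rule number 29. For every nonempty finite word $u\in\{0,1\}^*$, the deterministic communication complexity of $\textsc{SInv}_{F,u}$ restricted to inputs of length $n$ is bounded by a constant independent of $n$.
   Context: An elementary cellular automaton (ECA) with rule number $N\in\{0,\dots,255\}$ is the map $F:\{0,1\}^{\mathbb Z}\to\{0,1\}^{\mathbb Z}$ given by $F(x)_i=f(x_{i-1},x_i,x_{i+1})$. Here the local rule $f:\{0,1\}^3\to\{0,1\}$ is determined by $N=\sum_{a,b,c\in\{0,1\}}2^{4a+2b+c}f(a,b,c)$. For a nonempty finite word $u$, $p_u\in\{0,1\}^{\mathbb Z}$ is defined by $(p_u)_i=u_{i\bmod |u|}$. For a finite word $x$, $p_u[x]$ is the configuration equal to $x$ on positions $0,\dots,|x|-1$ and to $p_u$ elsewhere. $\textsc{SInv}_{F,u}$ is the decision problem: on input a finite word $x$, decide whether there is an integer $w$ such that for all $t\ge0$ the set of positions where $F^t(p_u)$ and $F^t(p_u[x])$ differ is contained in an interval of length $w$. For each $n$, it is regarded as a function $\{0,1\}^n\to\{0,1\}$. For a function $g:X\times Y\to Z$, $D(g)$ is the minimal depth of a deterministic two-party protocol computing $g$. In such a protocol, Alice knows $x$ and Bob knows $y$. The protocol is a binary tree: each internal node is labelled by a function of Alice's input only or of Bob's input only, with values in $\{\text{left},\text{right}\}$, and each leaf is labelled by an output value. For $g:\{0,1\}^m\to Z$, set $D(g)=\max_{0\le i<m}D(g_i)$, where $g_i:\{0,1\}^i\times\{0,1\}^{m-i}\to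 Z$ is $g_i(x,y)=g(xy)$. *)

theory Defs
  imports Main
begin

text \<open>Configurations in {0,1}^Z are modelled as int => bool (True = 1).\<close>
type_synonym config = "int \<Rightarrow> bool"

definition eca_local :: "nat \<Rightarrow> bool \<Rightarrow> bool \<Rightarrow> bool \<Rightarrow> bool" where
  "eca_local N a b c = bit N (4 * of_bool a + 2 * of_bool b + of_bool c)"

definition eca :: "nat \<Rightarrow> config \<Rightarrow> config" where
  "eca N x = (\<lambda>i. eca_local N (x (i - 1)) (x i) (x (i + 1)))"

definition per :: "bool list \<Rightarrow> config" where
  "per u = (\<lambda>i. u ! nat (i mod int (length u)))"

definition per_patch :: "bool list \<Rightarrow> bool list \<Rightarrow> config" where
  "per_patch u x = (\<lambda>i. if 0 \<le> i \<and> i < int (length x) then x ! nat i else per u i)"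

definition SInv :: "nat \<Rightarrow> bool list \<Rightarrow> bool list \<Rightarrow> bool" where
  "SInv N u x = (\<exists>w::int. \<forall>t::nat. \<exists>a::int.
      {i. (eca N ^^ t) (per u) i \<noteq> (eca N ^^ t) (per_patch u x) i} \<subseteq> {a..<a + w})"

datatype ('a, 'b, 'z) protocol =
    Leaf 'z
  | AliceNode "'a \<Rightarrow> bool" "('a, 'b, 'z) protocol" "('a, 'b, 'z) protocol"
  | BobNode "'b \<Rightarrow> bool" "('a, 'b, 'z) protocol" "('a, 'b, 'z) protocol"

fun run :: "('a, 'b, 'z) protocol \<Rightarrow> 'a \<Rightarrow> 'b \<Rightarrow> 'z" where
  "run (Leaf z) x y = z"
| "run (AliceNode f l r) x y = (if f x then run l x y else run r x y)"
| "run (BobNode f l r) x y = (if f y then run l x y else run r x y)"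

fun depth :: "('a, 'b, 'z) protocol \<Rightarrow> nat" where
  "depth (Leaf z) = 0"
| "depth (AliceNode f l r) = Suc (max (depth l) (depth r))"
| "depth (BobNode f l r) = Suc (max (depth l) (depth r))"

definition Dcc :: "'a set \<Rightarrow> 'b set \<Rightarrow> ('a \<Rightarrow> 'b \<Rightarrow> 'z) \<Rightarrow> nat" where
  "Dcc X Y g = (LEAST d. \<exists>P. depth P = d \<and> (\<forall>x\<in>X. \<forall>y\<in>Y. run P x y = g x y))"

text \<open>For g : {0,1}^m -> Z, D(g) = max over i<m of D(g_i), g_i(x,y) = g(xy).
  (Max with 0 added so that m = 0 gives 0.)\<close>
definition Dword :: "nat \<Rightarrow> (bool list \<Rightarrow> 'z) \<Rightarrow> nat" where
  "Dword m g = Max (insert 0 {Dcc {x. length x = i} {y. length y = m - i} (\<lambda>x y. g (x @ y)) | i. i < m})"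

end

theory Submission
  imports Defs
begin

lemma l13: "eca_local 13 a b c = (\<not>a \<and> (b \<or> \<not>c))"
  by (cases a; cases b; cases c; simp add: eca_local_def bit_0)
lemma l29: "eca_local 29 a b c = (if a then \<not>b \<and> \<not>c else b \<or> \<not>c)"
  by (cases a; cases b; cases c; simp add: eca_local_def bit_0)
lemma e29: "eca 29 x i = (if x (i-1) then \<not>x i \<and> \<not>x (i+1) else x i \<or> \<not>x (i+1))"
  by (simp add: eca_def l29)
lemma e13: "eca 13 x i = (\<not>x (i-1) \<and> (x i \<or> \<not>x (i+1)))"
  by (simp add: eca_def l13)
lemma F3: "eca 29 (eca 29 (eca 29 x)) = eca 29 x"
proof
  fix i
  have a: "i - 1 - 1 = i - 2" "i - 1 + 1 = i" "i + 1 - 1 = i" "i+1+1 = i+2"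
     "i - 2 - 1 = i - 3" "i - 2 + 1 = i - 1" "i+2-1 = i+1" "i+2+1=i+3" for i :: int by auto
  show "eca 29 (eca 29 (eca 29 x)) i = eca 29 x i"
    apply (simp only: e29 a)
    apply (cases "x (i-3)"; cases "x (i-2)"; cases "x (i-1)"; cases "x i"; cases "x (i+1)"; cases "x (i+2)"; cases "x (i+3)")
    apply simp_all
    done
qed


lemma eca_cong: "z (j-1) = z' (j-1) \<Longrightarrow> z j = z' j \<Longrightarrow> z (j+1) = z' (j+1) \<Longrightarrow> eca N z j = eca N z' j"
  by (simp add: eca_def)

lemma funpow_S: "(f ^^ Suc k) z = f ((f ^^ k) z)" by simp

lemma locality:
  assumes "\<forall>j. j < a \<or> j > b \<longrightarrow> x j = y j"
  shows "j < a - int k \<or> j > b + int k \<Longrightarrow> (eca N ^^ k) x j = (eca N ^^ k) y j"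
proof (induction k arbitrary: j)
  case 0 then show ?case using assms by auto
next
  case (Suc k)
  have "(eca N ^^ k) x (j-1) = (eca N ^^ k) y (j-1)" "(eca N ^^ k) x j = (eca N ^^ k) y j"
       "(eca N ^^ k) x (j+1) = (eca N ^^ k) y (j+1)"
    using Suc by (auto intro!: Suc.IH)
  then show ?case unfolding funpow_S by (rule eca_cong)
qed

lemma patch_agree: "j < 0 \<or> j > int (length x) - 1 \<Longrightarrow> per_patch u x j = per u j"
  by (auto simp: per_patch_def)

lemma pow29: "\<exists>k\<le>2. (eca 29 ^^ t) = (eca 29 ^^ k)"
proof (induction t)
  case 0 then show ?case by auto
next
  case (Suc t)
  then obtain k where k: "k \<le> 2" "(eca 29 ^^ t) = (eca 29 ^^ k)" by auto
  show ?case
  proof (cases "k = 2")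
    case True
    have "(eca 29 ^^ Suc t) = eca 29 \<circ> (eca 29 ^^ 2)" using k True by simp
    also have "\<dots> = eca 29 ^^ 1" using F3 by (auto simp: numeral_2_eq_2)
    finally show ?thesis by (intro exI[of _ 1]) simp
  next
    case False
    then show ?thesis using k by (intro exI[of _ "Suc k"]) auto
  qed
qed

lemma SInv29: "SInv 29 u x"
  unfolding SInv_def
proof (rule exI[of _ "int (length x) + 4"], rule allI)
  fix t
  obtain k where k: "k \<le> 2" "(eca 29 ^^ t) = (eca 29 ^^ k)" using pow29 by blast
  have "{i. (eca 29 ^^ t) (per u) i \<noteq> (eca 29 ^^ t) (per_patch u x) i} \<subseteq> {-2..<-2 + (int (length x) + 4)}"
  proof
    fix i assume "i \<in> {i. (eca 29 ^^ t) (per u) i \<noteq> (eca 29 ^^ t) (per_patch u x) i}"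
    then have d: "(eca 29 ^^ k) (per_patch u x) i \<noteq> (eca 29 ^^ k) (per u) i" using k by auto
    have "\<not> (i < 0 - int k \<or> i > (int (length x) - 1) + int k)"
      using locality[of 0 "int (length x) - 1" "per_patch u x" "per u" i k 29] patch_agree d by blast
    then show "i \<in> {-2..<-2 + (int (length x) + 4)}" using k by auto
  qed
  then show "\<exists>a. {i. (eca 29 ^^ t) (per u) i \<noteq> (eca 29 ^^ t) (per_patch u x) i} \<subseteq> {a..<a + (int (length x) + 4)}"
    by blast
qed

lemma wall13:
  assumes "\<not> x i" "x (i+1)"
  shows "\<not> (eca 13 ^^ t) x i \<and> (eca 13 ^^ t) x (i+1)"
proof (induction t)
  case 0 then show ?case using assms by simp
next
  case (Suc t) then show ?case by (simp add: e13)
qed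

lemma sep13:
  assumes "\<not> x i1" "x (i1+1)" "\<not> x i2" "x (i2+1)"
    and agr: "\<forall>j. j \<le> i1+1 \<or> j \<ge> i2 \<longrightarrow> x j = y j"
  shows "j \<le> i1+1 \<or> j \<ge> i2 \<Longrightarrow> (eca 13 ^^ t) x j = (eca 13 ^^ t) y j"
proof (induction t arbitrary: j)
  case 0 then show ?case using agr by auto
next
  case (Suc t)
  have y: "\<not> y i1" "y (i1+1)" "\<not> y i2" "y (i2+1)" using assms by auto
  note wx1 = wall13[of x i1 t] and wx2 = wall13[of x i2 t]
     and wy1 = wall13[of y i1 t] and wy2 = wall13[of y i2 t]
  show ?case
  proof (cases "j = i1 + 1")
    case True
    then show ?thesis using wall13[of x i1 "Suc t"] wall13[of y i1 "Suc t"] assms y by blast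
  next
    case F1: False
    show ?thesis
    proof (cases "j = i2")
      case True
      then show ?thesis using wall13[of x i2 "Suc t"] wall13[of y i2 "Suc t"] assms y by blast
    next
      case False
      then have "j - 1 \<le> i1+1 \<or> j - 1 \<ge> i2" "j \<le> i1+1 \<or> j \<ge> i2" "j + 1 \<le> i1+1 \<or> j + 1 \<ge> i2"
        using Suc.prems F1 by auto
      then show ?thesis unfolding funpow_S by (intro eca_cong Suc.IH)
    qed
  qed
qed

lemma per_at:
  assumes "u \<noteq> []"
  shows "per u (int k + int (length u) * m) = u ! (k mod length u)"
proof -
  have "(int k + int (length u) * m) mod int (length u) = int k mod int (length u)"
    by (metis mod_mult_self1 mult.commute)
  also have "\<dots> = int (k mod length u)" by (simp add: zmod_int)
  finally show ?thesis by (simp add: per_def)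
qed

lemma nonconst_01:
  assumes "u \<noteq> []" "\<not> (\<forall>b\<in>set u. b = u ! 0)"
  shows "\<exists>j < length u. \<not> u ! j \<and> u ! ((j+1) mod length u)"
proof (rule ccontr)
  assume H: "\<not> ?thesis"
  let ?L = "length u"
  obtain j1 where j1: "j1 < ?L" "u ! j1 \<noteq> u ! 0" using assms by (auto simp: in_set_conv_nth)
  obtain j0 where j0: "j0 < ?L" "\<not> u ! j0"
    using j1 assms by (cases "u ! 0") (auto intro: exI[of _ 0])
  obtain j2 where j2: "j2 < ?L" "u ! j2"
    using j1 assms by (cases "u ! 0") (auto intro: exI[of _ 0])
  have "\<not> u ! ((j0 + k) mod ?L)" for k
  proof (induction k)
    case 0 then show ?case using j0 by simp
  next
    case (Suc k)
    have "(j0 + Suc k) mod ?L = ((j0 + k) mod ?L + 1) mod ?L" by (simp add: mod_Suc_eq)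
    moreover have "(j0 + k) mod ?L < ?L" using assms by simp
    ultimately show ?case using H Suc by auto
  qed
  from this[of "j2 + ?L - j0"] have "\<not> u ! ((j2 + ?L) mod ?L)" using j0 by simp
  then show False using j2 by simp
qed

lemma SInv13_nonconst:
  assumes "u \<noteq> []" "\<not> (\<forall>b\<in>set u. b = u ! 0)"
  shows "SInv 13 u x"
proof -
  let ?L = "length u"
  obtain j where j: "j < ?L" "\<not> u ! j" "u ! ((j+1) mod ?L)" using nonconst_01[OF assms] by blast
  define i1 where "i1 = int j + int ?L * (-2)"
  define i2 where "i2 = int j + int ?L * (int (length x) + 1)"
  have L: "?L \<ge> 1" using assms by (cases u) auto
  have p1: "\<not> per u i1" unfolding i1_def using per_at[OF assms(1), of j "-2"] j by simp
  have eq1: "i1 + 1 = int (j+1) + int ?L * (-2)" unfolding i1_def by simp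
  have p2: "per u (i1+1)" unfolding eq1 per_at[OF assms(1)] using j by simp
  have p3: "\<not> per u i2" unfolding i2_def using per_at[OF assms(1), of j] j by simp
  have eq2: "i2 + 1 = int (j+1) + int ?L * (int (length x) + 1)" unfolding i2_def by simp
  have p4: "per u (i2+1)" unfolding eq2 per_at[OF assms(1)] using j by simp
  have i1n: "i1 + 1 < 0" unfolding i1_def using j by simp
  have "1 * (int (length x) + 1) \<le> int ?L * (int (length x) + 1)"
    by (rule mult_right_mono) (use L in auto)
  then have i2n: "i2 > int (length x) - 1" unfolding i2_def by (smt (verit) of_nat_0_le_iff)
  have agr: "\<forall>j. j \<le> i1+1 \<or> j \<ge> i2 \<longrightarrow> per u j = per_patch u x j"
    using i1n i2n patch_agree by fastforce
  show ?thesis unfolding SInv_def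
  proof (rule exI[of _ "i2 - i1 - 2"], rule allI, rule exI[of _ "i1 + 2"])
    fix t
    show "{i. (eca 13 ^^ t) (per u) i \<noteq> (eca 13 ^^ t) (per_patch u x) i} \<subseteq> {i1 + 2..<i1 + 2 + (i2 - i1 - 2)}"
    proof
      fix i assume "i \<in> {i. (eca 13 ^^ t) (per u) i \<noteq> (eca 13 ^^ t) (per_patch u x) i}"
      then have "\<not> (i \<le> i1+1 \<or> i \<ge> i2)"
        using sep13[OF p1 p2 p3 p4 agr, of i t] by auto
      then show "i \<in> {i1 + 2..<i1 + 2 + (i2 - i1 - 2)}" by auto
    qed
  qed
qed


lemma per_const:
  assumes "u \<noteq> []" "\<forall>b\<in>set u. b = c"
  shows "per u = (\<lambda>_. c)"
proof
  fix i
  have "nat (i mod int (length u)) < length u" using assms(1)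
    by (simp add: nat_less_iff)
  then show "per u i = c" using assms(2) by (simp add: per_def)
qed

lemma bg13: "\<exists>b. (eca 13 ^^ t) (\<lambda>_. c) = (\<lambda>_. b)"
proof (induction t)
  case 0 then show ?case by auto
next
  case (Suc t)
  then obtain b where eq: "(eca 13 ^^ t) (\<lambda>_. c) = (\<lambda>_. b)" by auto
  have "eca 13 (\<lambda>_. b) = (\<lambda>_. \<not> b)" by (rule ext) (simp add: eca_def l13)
  then show ?case unfolding funpow_S eq by blast
qed

lemma SInv13_const:
  assumes u: "u \<noteq> []" "\<forall>b\<in>set u. b = c"
  shows "SInv 13 u x = (\<forall>b\<in>set x. b = c)"
proof
  assume all: "\<forall>b\<in>set x. b = c"
  have "per_patch u x = per u"
  proof
    fix i show "per_patch u x i = per u i"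
      using all per_const[OF u] by (auto simp: per_patch_def nat_less_iff)
  qed
  then show "SInv 13 u x" unfolding SInv_def by auto
next
  assume S: "SInv 13 u x"
  show "\<forall>b\<in>set x. b = c"
  proof (rule ccontr)
    assume "\<not> (\<forall>b\<in>set x. b = c)"
    then obtain k0 where k0: "k0 < length x" "x ! k0 \<noteq> c" by (auto simp: in_set_conv_nth)
    define Sx where "Sx = {k. k < length x \<and> x ! k \<noteq> c}"
    have finS: "finite Sx" "Sx \<noteq> {}" unfolding Sx_def using k0 by auto
    define r where "r = Max Sx"
    have r: "r < length x" "x ! r \<noteq> c" using Max_in[OF finS] unfolding r_def Sx_def by auto
    have rmax: "\<And>k. k \<in> Sx \<Longrightarrow> k \<le> r" unfolding r_def using finS by simp
    define q where "q = per_patch u x"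
    define p where "p = per u"
    have pc: "p = (\<lambda>_. c)" unfolding p_def using per_const[OF u] .
    have qr: "q (int r) = x ! r" unfolding q_def per_patch_def using r by simp
    have qright: "q j = c" if "j > int r" for j
    proof (cases "j < int (length x)")
      case True
      then have "nat j \<notin> Sx" using rmax that by fastforce
      then show ?thesis using True that unfolding q_def per_patch_def Sx_def
        using per_const[OF u] by auto
    next
      case False
      then show ?thesis using that unfolding q_def per_patch_def using per_const[OF u] by auto
    qed
    have R: "(\<forall>j > int r + int t. (eca 13 ^^ t) q j = (eca 13 ^^ t) p j) \<and>
             (eca 13 ^^ t) q (int r + int t) \<noteq> (eca 13 ^^ t) p (int r + int t)" for t
    proof (induction t)
      case 0 then show ?case using qright qr r pc by auto
    next
      case (Suc t)
      obtain b where b: "(eca 13 ^^ t) p = (\<lambda>_. b)" using bg13 pc by blast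
      have IH1: "\<And>j. j > int r + int t \<Longrightarrow> (eca 13 ^^ t) q j = b" using Suc b by auto
      have IH2: "(eca 13 ^^ t) q (int r + int t) \<noteq> b" using Suc b by auto
      have A: "\<forall>j > int r + int (Suc t). (eca 13 ^^ Suc t) q j = (eca 13 ^^ Suc t) p j"
      proof (intro allI impI)
        fix j assume "j > int r + int (Suc t)"
        then show "(eca 13 ^^ Suc t) q j = (eca 13 ^^ Suc t) p j"
          unfolding funpow_S by (intro eca_cong) (auto simp: IH1 b)
      qed
      have e1: "int r + int (Suc t) - 1 = int r + int t" by simp
      have e2: "int r + int (Suc t) > int r + int t" "int r + int (Suc t) + 1 > int r + int t" by auto
      have B: "(eca 13 ^^ Suc t) q (int r + int (Suc t)) = (\<not> (eca 13 ^^ t) q (int r + int t))"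
        unfolding funpow_S e13[of "(eca 13 ^^ t) q"] e1 using IH1[OF e2(1)] IH1[OF e2(2)] by auto
      have C: "(eca 13 ^^ Suc t) p (int r + int (Suc t)) = (\<not> b)"
        unfolding funpow_S b e13[of "\<lambda>_. b"] by auto
      show ?case using A B C IH2 by auto
    qed
    obtain i where wi: "\<not> q i" "q (i+1)" "i \<le> int r"
    proof (cases c)
      case True
      have "\<not> q (int r)" using qr r True by simp
      moreover have "q (int r + 1)" using qright True by simp
      ultimately show ?thesis using that by auto
    next
      case False
      define m where "m = Min Sx"
      have m: "m \<in> Sx" unfolding m_def using Min_in[OF finS] .
      have mmin: "\<And>k. k \<in> Sx \<Longrightarrow> m \<le> k" unfolding m_def using finS by simp
      have mr: "m \<le> r" using rmax m by simp
      have qm: "q (int m)" using m False unfolding q_def per_patch_def Sx_def by auto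
      have qm1: "\<not> q (int m - 1)"
      proof (cases "m = 0")
        case True then show ?thesis using False per_const[OF u] unfolding q_def per_patch_def by simp
      next
        case m0: False
        then have "m - 1 \<notin> Sx" using mmin by fastforce
        then have "\<not> x ! (m - 1)" using False m unfolding Sx_def by auto
        moreover have "nat (int m - 1) = m - 1" using m0 by auto
        ultimately show ?thesis using m m0 unfolding q_def per_patch_def Sx_def by auto
      qed
      show ?thesis using that[of "int m - 1"] qm qm1 mr by auto
    qed
    obtain w where w: "\<forall>t::nat. \<exists>a. {i. (eca 13 ^^ t) p i \<noteq> (eca 13 ^^ t) q i} \<subseteq> {a..<a + w}"
      using S unfolding SInv_def p_def q_def by blast
    define t where "t = nat w + 2"
    obtain a where a: "{i. (eca 13 ^^ t) p i \<noteq> (eca 13 ^^ t) q i} \<subseteq> {a..<a + w}" using w by blast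
    obtain b where b: "(eca 13 ^^ t) p = (\<lambda>_. b)" using bg13 pc by blast
    have wt: "\<not> (eca 13 ^^ t) q i \<and> (eca 13 ^^ t) q (i+1)" using wall13[OF wi(1,2)] .
    obtain d where d: "d \<le> i + 1" "(eca 13 ^^ t) p d \<noteq> (eca 13 ^^ t) q d"
    proof (cases b)
      case True then show ?thesis using that[of i] wt b by auto
    next
      case False then show ?thesis using that[of "i+1"] wt b by auto
    qed
    have "int r + int t \<in> {a..<a + w}" using a R[of t] by auto
    moreover have "d \<in> {a..<a+w}" using a d by auto
    ultimately show False using d(1) wi(3) unfolding t_def by auto
  qed
qed

lemma Dcc_le: "(\<forall>x\<in>X. \<forall>y\<in>Y. run P x y = g x y) \<Longrightarrow> Dcc X Y g \<le> depth P"
  unfolding Dcc_def by (rule Least_le) blast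

lemma Dword_le:
  assumes "\<And>xa ya. g (xa @ ya) = (A xa \<and> B ya)"
  shows "Dword m g \<le> 2"
proof -
  define P :: "(bool list, bool list, bool) protocol" where
    "P = AliceNode A (BobNode B (Leaf True) (Leaf False)) (Leaf False)"
  have dP: "depth P = 2" unfolding P_def by simp
  have each: "Dcc X Y (\<lambda>x y. g (x @ y)) \<le> 2" for X Y
  proof -
    have "\<forall>x\<in>X. \<forall>y\<in>Y. run P x y = g (x @ y)" using assms by (simp add: P_def)
    then have "Dcc X Y (\<lambda>x y. g (x @ y)) \<le> depth P" by (rule Dcc_le)
    then show ?thesis using dP by simp
  qed
  have fin: "finite {Dcc {x. length x = i} {y. length y = m - i} (\<lambda>x y. g (x @ y)) | i. i < m}"
    by simp
  show ?thesis unfolding Dword_def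
    by (rule Max.boundedI) (use fin each in auto)
qed

theorem mainTheorem5:
  fixes N :: nat and u :: "bool list"
  assumes "N = 13 \<or> N = 29"
    and "u \<noteq> []"
  shows "\<exists>C. \<forall>n. Dword n (SInv N u) \<le> C"
proof (intro exI[of _ 2] allI)
  fix n
  show "Dword n (SInv N u) \<le> 2"
  proof (cases "N = 13 \<and> (\<forall>b\<in>set u. b = u ! 0)")
    case True
    then have "SInv N u z = (\<forall>b\<in>set z. b = u ! 0)" for z
      using SInv13_const[OF assms(2)] by auto
    then show ?thesis by (intro Dword_le[of _ "\<lambda>z. \<forall>b\<in>set z. b = u ! 0" "\<lambda>z. \<forall>b\<in>set z. b = u ! 0"]) auto
  next
    case False
    then have "SInv N u z" for z using assms SInv29 SInv13_nonconst by auto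
    then show ?thesis by (intro Dword_le[of _ "\<lambda>_. True" "\<lambda>_. True"]) auto
  qed
qed

end
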